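(* If the ring $D(R_A)$ is simple, then the semigroup $\mathbb NA$ is scored.
   Context: $A\subset\mathbb Z^d$ is a finite set generating the group $\mathbb Z^d$; $R_A=\mathbb C[\mathbb NA]\subseteq\mathbb C[t_1^{\pm1},\dots,t_d^{\pm1}]$; $D(R_A)=\{P\in\mathbb C[t^{\pm1}]\langle\partial_1,\dots,\partial_d\rangle:P(R_A)\subseteq R_A\}$. For a facet $\sigma$ of the cone $\mathbb R_{\ge0}A$, $F_\sigma$ is the unique linear form with $F_\sigma(\mathbb R_{\ge0}A)\ge0$, $F_\sigma(\sigma)=0$, $F_\sigma(\mathbb Z^d)=\mathbb Z$. $\mathbb NA$ is scored if $\mathbb NA=\bigcap_{\sigma\text{ facet}}\{\mathbf a\in\mathbb Z^d:F_\sigma(\mathbf a)\in F_\sigma(\mathbb NA)\}$. Simple means no two-sided ideals other than $0$ and $D(R_A)$. *)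

theory Defs
  imports "HOL-Analysis.Analysis" "HOL-Algebra.Ideal"
begin

text \<open>Lattice points of Z^d are vectors int^'d (d = CARD('d) arbitrary but fixed).
  A Laurent polynomial in C[t_1^{+-1},...,t_d^{+-1}] is a finitely supported coefficient
  function on Z^d.\<close>

type_synonym 'd lpoly = "int ^ 'd \<Rightarrow> complex"

definition laurent :: "'d lpoly \<Rightarrow> bool" where
  "laurent f \<longleftrightarrow> finite {m. f m \<noteq> 0}"

definition semigrp :: "(int ^ 'd) set \<Rightarrow> (int ^ 'd) set" where
  "semigrp A = {m. \<exists>k :: int ^ 'd \<Rightarrow> nat. m = (\<Sum>a\<in>A. int (k a) *s a)}"

definition grp :: "(int ^ 'd) set \<Rightarrow> (int ^ 'd) set" where
  "grp A = {m. \<exists>k :: int ^ 'd \<Rightarrow> int. m = (\<Sum>a\<in>A. k a *s a)}"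

definition R_A :: "(int ^ 'd) set \<Rightarrow> 'd lpoly set" where
  "R_A A = {f. laurent f \<and> {m. f m \<noteq> 0} \<subseteq> semigrp A}"

text \<open>Action of the monomial operator t^a \<partial>^b on a (coefficient function of a)
  Laurent polynomial: \<partial>^b t^n = (prod_i n_i (n_i-1) ... (n_i-b_i+1)) t^(n-b), then
  multiply by t^a.\<close>
definition mono_op :: "int ^ 'd \<Rightarrow> nat ^ 'd \<Rightarrow> 'd lpoly \<Rightarrow> 'd lpoly" where
  "mono_op a b f = (\<lambda>m. let n = m - a + (\<chi> i. int (b $ i)) in
      f n * (\<Prod>i\<in>UNIV. of_int (\<Prod>j<b $ i. n $ i - int j)))"

definition diff_coeffs :: "((int ^ 'd) \<times> (nat ^ 'd) \<Rightarrow> complex) \<Rightarrow> bool" where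
  "diff_coeffs c \<longleftrightarrow> finite {ab. c ab \<noteq> 0}"

definition diffop :: "((int ^ 'd) \<times> (nat ^ 'd) \<Rightarrow> complex) \<Rightarrow> 'd lpoly \<Rightarrow> 'd lpoly" where
  "diffop c f = (\<lambda>m. \<Sum>ab\<in>{ab. c ab \<noteq> 0}. c ab * mono_op (fst ab) (snd ab) f m)"

text \<open>D(R_A): operators of C[t^{+-1}]<\<partial>> mapping R_A into R_A (elements of the
  Laurent Weyl algebra are identified with the operators they induce, which is faithful).\<close>
definition DR :: "(int ^ 'd) set \<Rightarrow> ('d lpoly \<Rightarrow> 'd lpoly) set" where
  "DR A = {P. \<exists>c. diff_coeffs c \<and> P = diffop c \<and> (\<forall>f\<in>R_A A. P f \<in> R_A A)}"

definition D_ring :: "(int ^ 'd) set \<Rightarrow> ('d lpoly \<Rightarrow> 'd lpoly) ring" where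
  "D_ring A = \<lparr> carrier = DR A, monoid.mult = (\<lambda>P Q. P \<circ> Q), one = id,
                zero = (\<lambda>f m. 0), add = (\<lambda>P Q f m. P f m + Q f m) \<rparr>"

definition simple_ring :: "('a, 'b) ring_scheme \<Rightarrow> bool" where
  "simple_ring R \<longleftrightarrow> (\<forall>I. ideal I R \<longrightarrow> I = {\<zero>\<^bsub>R\<^esub>} \<or> I = carrier R)"

definition to_real :: "int ^ 'd \<Rightarrow> real ^ 'd" where
  "to_real m = (\<chi> i. real_of_int (m $ i))"

definition real_cone :: "(int ^ 'd) set \<Rightarrow> (real ^ 'd) set" where
  "real_cone A = {x. \<exists>c :: int ^ 'd \<Rightarrow> real. (\<forall>a\<in>A. c a \<ge> 0) \<and>
                      x = (\<Sum>a\<in>A. c a *\<^sub>R to_real a)}"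

definition Fform :: "(int ^ 'd) set \<Rightarrow> (real ^ 'd) set \<Rightarrow> real ^ 'd \<Rightarrow> real" where
  "Fform A \<sigma> = (THE F. linear F \<and> (\<forall>x\<in>real_cone A. F x \<ge> 0) \<and> (\<forall>x\<in>\<sigma>. F x = 0)
                      \<and> range (\<lambda>m. F (to_real m)) = \<int>)"

definition scored :: "(int ^ 'd) set \<Rightarrow> bool" where
  "scored A \<longleftrightarrow> semigrp A =
     \<Inter> {{m. Fform A \<sigma> (to_real m) \<in> (\<lambda>n. Fform A \<sigma> (to_real n)) ` semigrp A}
         | \<sigma>. \<sigma> facet_of real_cone A}"

end

theory Submission
  imports Defs "HOL-Computational_Algebra.Polynomial"
begin

definition bvec :: "nat ^ 'd \<Rightarrow> int ^ 'd" where
  "bvec b = (\<chi> i. int (b $ i))"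

definition ffc :: "int ^ 'd \<Rightarrow> nat ^ 'd \<Rightarrow> complex" where
  "ffc n b = (\<Prod>i\<in>UNIV. of_int (\<Prod>j<b $ i. n $ i - int j))"

definition shop :: "int ^ 'd \<Rightarrow> (int ^ 'd \<Rightarrow> complex) \<Rightarrow> 'd lpoly \<Rightarrow> 'd lpoly" where
  "shop s p f m = p (m - s) * f (m - s)"

lemma mono_op_alt: "mono_op a b f m = f (m - a + bvec b) * ffc (m - a + bvec b) b"
  by (simp add: mono_op_def bvec_def ffc_def Let_def)

lemma mono_op_shop: "mono_op a b = shop (a - bvec b) (\<lambda>n. ffc n b)"
  by (intro ext) (simp add: mono_op_alt shop_def algebra_simps)

definition isdo :: "(('d::finite) lpoly \<Rightarrow> 'd lpoly) \<Rightarrow> bool" where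
  "isdo P \<longleftrightarrow> (\<exists>c. diff_coeffs c \<and> P = diffop c)"

lemma diffop_sum:
  assumes "finite U" "{ab. c ab \<noteq> 0} \<subseteq> U"
  shows "diffop c f m = (\<Sum>ab\<in>U. c ab * mono_op (fst ab) (snd ab) f m)"
  unfolding diffop_def
  by (rule sum.mono_neutral_left) (use assms in auto)

lemma isdo_add:
  assumes "isdo P" "isdo Q" shows "isdo (\<lambda>f m. P f m + Q f m)"
proof -
  obtain c d where c: "diff_coeffs c" "P = diffop c" and d: "diff_coeffs d" "Q = diffop d"
    using assms unfolding isdo_def by blast
  let ?U = "{ab. c ab \<noteq> 0} \<union> {ab. d ab \<noteq> 0}"
  have fU: "finite ?U" using c d by (simp add: diff_coeffs_def)
  have e: "diff_coeffs (\<lambda>ab. c ab + d ab)"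
    unfolding diff_coeffs_def by (rule finite_subset[OF _ fU]) auto
  have "(\<lambda>f m. P f m + Q f m) = diffop (\<lambda>ab. c ab + d ab)"
  proof (intro ext)
    fix f m
    have "diffop (\<lambda>ab. c ab + d ab) f m = (\<Sum>ab\<in>?U. (c ab + d ab) * mono_op (fst ab) (snd ab) f m)"
      by (rule diffop_sum[OF fU]) auto
    also have "\<dots> = (\<Sum>ab\<in>?U. c ab * mono_op (fst ab) (snd ab) f m) + (\<Sum>ab\<in>?U. d ab * mono_op (fst ab) (snd ab) f m)"
      by (simp add: distrib_right sum.distrib)
    also have "\<dots> = P f m + Q f m"
      using c d diffop_sum[OF fU, of c] diffop_sum[OF fU, of d] by auto
    finally show "P f m + Q f m = diffop (\<lambda>ab. c ab + d ab) f m" by simp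
  qed
  then show ?thesis using e unfolding isdo_def by blast
qed

lemma isdo_smult:
  assumes "isdo P" shows "isdo (\<lambda>f m. k * P f m)"
proof -
  obtain c where c: "diff_coeffs c" "P = diffop c"
    using assms unfolding isdo_def by blast
  let ?U = "{ab. c ab \<noteq> 0}"
  have fU: "finite ?U" using c by (simp add: diff_coeffs_def)
  have e: "diff_coeffs (\<lambda>ab. k * c ab)"
    unfolding diff_coeffs_def by (rule finite_subset[OF _ fU]) auto
  have "(\<lambda>f m. k * P f m) = diffop (\<lambda>ab. k * c ab)"
  proof (intro ext)
    fix f m
    have "diffop (\<lambda>ab. k * c ab) f m = (\<Sum>ab\<in>?U. (k * c ab) * mono_op (fst ab) (snd ab) f m)"
      by (rule diffop_sum[OF fU]) auto
    also have "\<dots> = k * (\<Sum>ab\<in>?U. c ab * mono_op (fst ab) (snd ab) f m)"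
      by (simp add: sum_distrib_left mult.assoc)
    also have "\<dots> = k * P f m"
      using c diffop_sum[OF fU, of c] by auto
    finally show "k * P f m = diffop (\<lambda>ab. k * c ab) f m" by simp
  qed
  then show ?thesis using e unfolding isdo_def by blast
qed

lemma isdo_zero: "isdo (\<lambda>f m. 0)"
proof -
  have "diff_coeffs (\<lambda>ab. 0)" by (simp add: diff_coeffs_def)
  moreover have "(\<lambda>f m. 0) = diffop (\<lambda>ab. 0)" by (intro ext) (simp add: diffop_def)
  ultimately show ?thesis unfolding isdo_def by blast
qed

lemma isdo_mono: "isdo (mono_op a b)"
proof -
  let ?c = "\<lambda>ab. if ab = (a, b) then (1::complex) else 0"
  have "diff_coeffs ?c" by (simp add: diff_coeffs_def)
  moreover have "mono_op a b = diffop ?c"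
  proof (intro ext)
    fix f m
    have "diffop ?c f m = (\<Sum>ab\<in>{(a,b)}. ?c ab * mono_op (fst ab) (snd ab) f m)"
      by (rule diffop_sum) auto
    then show "mono_op a b f m = diffop ?c f m" by simp
  qed
  ultimately show ?thesis unfolding isdo_def by blast
qed

lemma isdo_sum:
  assumes "finite U" "\<And>u. u \<in> U \<Longrightarrow> isdo (G u)"
  shows "isdo (\<lambda>f m. \<Sum>u\<in>U. G u f m)"
  using assms
proof (induction U rule: finite_induct)
  case empty then show ?case by (simp add: isdo_zero)
next
  case (insert x F)
  have "isdo (\<lambda>f m. G x f m + (\<Sum>u\<in>F. G u f m))"
    by (rule isdo_add) (use insert in auto)
  then show ?case using insert by simp
qed

lemma isdo_cases:
  assumes "isdo P"
  obtains U c where "finite U" "P = (\<lambda>f m. \<Sum>ab\<in>U. c ab * mono_op (fst ab) (snd ab) f m)"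
proof -
  obtain c where c: "diff_coeffs c" "P = diffop c"
    using assms unfolding isdo_def by blast
  show ?thesis
    by (rule that[of "{ab. c ab \<noteq> 0}" c]) (use c in \<open>auto simp: diff_coeffs_def diffop_def\<close>)
qed

inductive pf :: "(int ^ ('d::finite) \<Rightarrow> complex) \<Rightarrow> bool" where
  pf_const: "pf (\<lambda>n. c)"
| pf_add: "pf p \<Longrightarrow> pf q \<Longrightarrow> pf (\<lambda>n. p n + q n)"
| pf_x: "pf p \<Longrightarrow> pf (\<lambda>n. of_int (n $ i) * p n)"

lemma pf_smult: "pf p \<Longrightarrow> pf (\<lambda>n. k * p n)"
proof (induction rule: pf.induct)
  case (pf_const c) then show ?case using pf.pf_const by auto
next
  case (pf_add p q) then show ?case using pf.pf_add[of "\<lambda>n. k * p n" "\<lambda>n. k * q n"]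
    by (simp add: distrib_left)
next
  case (pf_x p i) then show ?case using pf.pf_x[of "\<lambda>n. k * p n" i]
    by (simp add: ac_simps)
qed

lemma pf_mult: "pf p \<Longrightarrow> pf q \<Longrightarrow> pf (\<lambda>n. p n * q n)"
proof (induction rule: pf.induct)
  case (pf_const c) then show ?case using pf_smult by auto
next
  case (pf_add p p') then show ?case using pf.pf_add[of "\<lambda>n. p n * q n" "\<lambda>n. p' n * q n"]
    by (simp add: distrib_right)
next
  case (pf_x p i) then show ?case using pf.pf_x[of "\<lambda>n. p n * q n" i]
    by (simp add: ac_simps)
qed

lemma pf_shift: "pf p \<Longrightarrow> pf (\<lambda>n. p (n + t))"
proof (induction rule: pf.induct)
  case (pf_const c) then show ?case using pf.pf_const by auto
next
  case (pf_add p q) then show ?case using pf.pf_add by auto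
next
  case (pf_x p i)
  have "pf (\<lambda>n. of_int (n $ i) * p (n + t) + of_int (t $ i) * p (n + t))"
    by (rule pf.pf_add) (use pf_x pf.pf_x pf_smult in auto)
  then show ?case by (simp add: distrib_right)
qed

lemma pf_prod: "finite I \<Longrightarrow> (\<And>i. i \<in> I \<Longrightarrow> pf (g i)) \<Longrightarrow> pf (\<lambda>n. \<Prod>i\<in>I. g i n)"
proof (induction I rule: finite_induct)
  case empty then show ?case using pf_const by simp
next
  case (insert x F) then show ?case using pf_mult[of "g x" "\<lambda>n. \<Prod>i\<in>F. g i n"] by simp
qed

lemma pf_ff1: "pf (\<lambda>n. of_int (\<Prod>j<k. n $ i - int j))"
proof (induction k)
  case 0 then show ?case using pf_const by simp
next
  case (Suc k)
  have eq: "(\<lambda>n. of_int (\<Prod>j<Suc k. n $ i - int j)) = (\<lambda>n. of_int (n $ i) * of_int (\<Prod>j<k. n $ i - int j) + (- of_nat k) * (of_int (\<Prod>j<k. n $ i - int j) :: complex))"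
    by (intro ext) (simp add: algebra_simps)
  show ?case unfolding eq by (intro pf_add pf_x pf_smult Suc)
qed

lemma pf_ffc: "pf (\<lambda>n. ffc n b)"
  unfolding ffc_def by (rule pf_prod[OF finite]) (rule pf_ff1)

inductive vsp :: "(int ^ ('d::finite) \<Rightarrow> complex) \<Rightarrow> bool" where
  vs_ff: "vsp (\<lambda>n. ffc n b)"
| vs_zero: "vsp (\<lambda>n. 0)"
| vs_add: "vsp p \<Longrightarrow> vsp q \<Longrightarrow> vsp (\<lambda>n. p n + q n)"
| vs_smult: "vsp p \<Longrightarrow> vsp (\<lambda>n. k * p n)"

definition bump :: "nat ^ 'd \<Rightarrow> 'd \<Rightarrow> nat ^ 'd" where
  "bump b i = (\<chi> j. if j = i then Suc (b $ i) else b $ j)"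

lemma ffc_bump: "ffc n (bump b i) = ffc n b * of_int (n $ i - int (b $ i))"
proof -
  have "ffc n (bump b i) = of_int (\<Prod>j<Suc (b $ i). n $ i - int j) *
          (\<Prod>k\<in>UNIV - {i}. of_int (\<Prod>j<b $ k. n $ k - int j))"
    unfolding ffc_def bump_def
    by (subst prod.remove[of _ i]) (auto intro!: prod.cong)
  also have "\<dots> = of_int (\<Prod>j<b $ i. n $ i - int j) * of_int (n $ i - int (b $ i)) *
          (\<Prod>k\<in>UNIV - {i}. of_int (\<Prod>j<b $ k. n $ k - int j))"
    by simp
  also have "\<dots> = ffc n b * of_int (n $ i - int (b $ i))"
    unfolding ffc_def by (subst (2) prod.remove[of _ i]) (auto simp: ac_simps)
  finally show ?thesis .
qed

lemma vsp_x: "vsp p \<Longrightarrow> vsp (\<lambda>n. of_int (n $ i) * p n)"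
proof (induction rule: vsp.induct)
  case (vs_ff b)
  have "vsp (\<lambda>n. ffc n (bump b i) + of_nat (b $ i) * ffc n b)"
    by (intro vs_add vs_smult vsp.vs_ff)
  moreover have "ffc n (bump b i) + of_nat (b $ i) * ffc n b = of_int (n $ i) * ffc n b" for n
    by (simp add: ffc_bump algebra_simps)
  ultimately show ?case by simp
next
  case vs_zero then show ?case using vsp.vs_zero by simp
next
  case (vs_add p q) then show ?case using vsp.vs_add[of "\<lambda>n. of_int (n $ i) * p n" "\<lambda>n. of_int (n $ i) * q n"]
    by (simp add: distrib_left)
next
  case (vs_smult p k) then show ?case using vsp.vs_smult[of "\<lambda>n. of_int (n $ i) * p n" k]
    by (simp add: ac_simps)
qed

lemma ffc_zero: "ffc n 0 = 1"
  by (simp add: ffc_def)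

lemma pf_vsp: "pf p \<Longrightarrow> vsp p"
proof (induction rule: pf.induct)
  case (pf_const c)
  have "vsp (\<lambda>n. c * ffc n 0)" by (intro vs_smult vs_ff)
  then show ?case by (simp add: ffc_zero)
next
  case (pf_add p q) then show ?case using vs_add by blast
next
  case (pf_x p i) then show ?case using vsp_x by blast
qed

lemma vsp_isdo: "vsp p \<Longrightarrow> isdo (shop s p)"
proof (induction rule: vsp.induct)
  case (vs_ff b)
  have "shop s (\<lambda>n. ffc n b) = mono_op (s + bvec b) b" by (simp add: mono_op_shop)
  then show ?case using isdo_mono by simp
next
  case vs_zero
  have "shop s (\<lambda>n. 0) = (\<lambda>f m. 0)" by (intro ext) (simp add: shop_def)
  then show ?case using isdo_zero by simp
next
  case (vs_add p q)
  have "shop s (\<lambda>n. p n + q n) = (\<lambda>f m. shop s p f m + shop s q f m)"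
    by (intro ext) (simp add: shop_def distrib_right)
  then show ?case using isdo_add[OF vs_add.IH] by simp
next
  case (vs_smult p k)
  have "shop s (\<lambda>n. k * p n) = (\<lambda>f m. k * shop s p f m)"
    by (intro ext) (simp add: shop_def)
  then show ?case using isdo_smult[OF vs_smult.IH] by simp
qed

lemma pf_isdo: "pf p \<Longrightarrow> isdo (shop s p)"
  using pf_vsp vsp_isdo by blast

lemma shop_comp: "shop s p \<circ> shop t q = shop (s + t) (\<lambda>n. p (n + t) * q n)"
  by (intro ext) (simp add: shop_def algebra_simps)

lemma isdo_mono_comp_mono: "isdo (mono_op a b \<circ> mono_op a' b')"
  unfolding mono_op_shop shop_comp
  by (intro pf_isdo pf_mult pf_shift pf_ffc)

lemma mono_op_lin: "mono_op a b (\<lambda>m. \<Sum>u\<in>U. k u * g u m) = (\<lambda>m. \<Sum>u\<in>U. k u * mono_op a b (g u) m)"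
  by (intro ext) (simp add: mono_op_alt sum_distrib_right sum_distrib_left ac_simps)

lemma isdo_mono_comp: assumes "isdo Q" shows "isdo (mono_op a b \<circ> Q)"
proof -
  obtain U c where U: "finite U" "Q = (\<lambda>f m. \<Sum>ab\<in>U. c ab * mono_op (fst ab) (snd ab) f m)"
    by (rule isdo_cases[OF assms])
  have "mono_op a b \<circ> Q = (\<lambda>f m. \<Sum>ab\<in>U. c ab * (mono_op a b \<circ> mono_op (fst ab) (snd ab)) f m)"
    by (intro ext) (simp add: U mono_op_lin)
  moreover have "isdo \<dots>"
    by (rule isdo_sum[OF U(1)], rule isdo_smult, rule isdo_mono_comp_mono)
  ultimately show ?thesis by simp
qed

lemma isdo_comp: assumes "isdo P" "isdo Q" shows "isdo (P \<circ> Q)"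
proof -
  obtain U c where U: "finite U" "P = (\<lambda>f m. \<Sum>ab\<in>U. c ab * mono_op (fst ab) (snd ab) f m)"
    by (rule isdo_cases[OF assms(1)])
  have "P \<circ> Q = (\<lambda>f m. \<Sum>ab\<in>U. c ab * (mono_op (fst ab) (snd ab) \<circ> Q) f m)"
    by (intro ext) (simp add: U)
  moreover have "isdo \<dots>"
    by (rule isdo_sum[OF U(1)], rule isdo_smult, rule isdo_mono_comp[OF assms(2)])
  ultimately show ?thesis by simp
qed

definition RS :: "(int ^ 'd) set \<Rightarrow> 'd lpoly set" where
  "RS T = {f. laurent f \<and> {m. f m \<noteq> 0} \<subseteq> T}"

lemma R_A_RS: "R_A A = RS (semigrp A)"
  by (simp add: R_A_def RS_def)

lemma RS_add: "f \<in> RS T \<Longrightarrow> g \<in> RS T \<Longrightarrow> (\<lambda>m. f m + g m) \<in> RS T"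
proof -
  assume f: "f \<in> RS T" and g: "g \<in> RS T"
  have "{m. f m + g m \<noteq> 0} \<subseteq> {m. f m \<noteq> 0} \<union> {m. g m \<noteq> 0}" by auto
  then show ?thesis using f g unfolding RS_def laurent_def
    by (auto elim!: finite_subset)
qed

lemma RS_smult: "f \<in> RS T \<Longrightarrow> (\<lambda>m. k * f m) \<in> RS T"
  unfolding RS_def laurent_def
  by (auto elim!: finite_subset[rotated])

lemma RS_neg: "f \<in> RS T \<Longrightarrow> (\<lambda>m. - f m) \<in> RS T"
  unfolding RS_def laurent_def by auto

lemma RS_zero: "(\<lambda>m. 0) \<in> RS T"
  unfolding RS_def laurent_def by auto

lemma DR_iff: "P \<in> DR A \<longleftrightarrow> isdo P \<and> (\<forall>f\<in>R_A A. P f \<in> R_A A)"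
  unfolding DR_def isdo_def by blast

lemma diffop_add_fun: "diffop c (\<lambda>m. g m + h m) m = diffop c g m + diffop c h m"
  by (simp add: diffop_def mono_op_alt algebra_simps sum.distrib)

lemma isdo_additive:
  assumes "isdo P" shows "P (\<lambda>m. g m + h m) m = P g m + P h m"
  using assms diffop_add_fun unfolding isdo_def by metis

lemma isdo_id: "isdo id"
proof -
  have "id = mono_op 0 0" by (intro ext) (simp add: mono_op_alt ffc_zero bvec_def zero_vec_def[symmetric])
  then show ?thesis using isdo_mono by metis
qed

lemma ring_D: "ring (D_ring A)"
proof (rule ringI)
  show "abelian_group (D_ring A)"
  proof (rule abelian_groupI)
    fix x y assume "x \<in> carrier (D_ring A)" "y \<in> carrier (D_ring A)"
    then show "x \<oplus>\<^bsub>D_ring A\<^esub> y \<in> carrier (D_ring A)"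
      by (auto simp: D_ring_def DR_iff R_A_RS intro: isdo_add RS_add)
  next
    show "\<zero>\<^bsub>D_ring A\<^esub> \<in> carrier (D_ring A)"
      by (auto simp: D_ring_def DR_iff R_A_RS intro: isdo_zero RS_zero)
  next
    fix x y z assume "x \<in> carrier (D_ring A)" "y \<in> carrier (D_ring A)" "z \<in> carrier (D_ring A)"
    then show "x \<oplus>\<^bsub>D_ring A\<^esub> y \<oplus>\<^bsub>D_ring A\<^esub> z = x \<oplus>\<^bsub>D_ring A\<^esub> (y \<oplus>\<^bsub>D_ring A\<^esub> z)"
      by (simp add: D_ring_def add.assoc)
  next
    fix x y assume "x \<in> carrier (D_ring A)" "y \<in> carrier (D_ring A)"
    then show "x \<oplus>\<^bsub>D_ring A\<^esub> y = y \<oplus>\<^bsub>D_ring A\<^esub> x"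
      by (simp add: D_ring_def add.commute)
  next
    fix x assume "x \<in> carrier (D_ring A)"
    then show "\<zero>\<^bsub>D_ring A\<^esub> \<oplus>\<^bsub>D_ring A\<^esub> x = x"
      by (simp add: D_ring_def)
  next
    fix x assume x: "x \<in> carrier (D_ring A)"
    let ?y = "\<lambda>f m. - x f m"
    have "?y \<in> carrier (D_ring A)"
      using x isdo_smult[of x "-1"] by (auto simp: D_ring_def DR_iff R_A_RS intro: RS_neg)
    moreover have "?y \<oplus>\<^bsub>D_ring A\<^esub> x = \<zero>\<^bsub>D_ring A\<^esub>"
      by (simp add: D_ring_def)
    ultimately show "\<exists>y\<in>carrier (D_ring A). y \<oplus>\<^bsub>D_ring A\<^esub> x = \<zero>\<^bsub>D_ring A\<^esub>" by blast
  qed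
next
  show "monoid (D_ring A)"
  proof (rule monoidI)
    fix x y assume "x \<in> carrier (D_ring A)" "y \<in> carrier (D_ring A)"
    then show "x \<otimes>\<^bsub>D_ring A\<^esub> y \<in> carrier (D_ring A)"
      by (auto simp: D_ring_def DR_iff intro: isdo_comp)
  next
    show "\<one>\<^bsub>D_ring A\<^esub> \<in> carrier (D_ring A)"
      by (auto simp: D_ring_def DR_iff intro: isdo_id)
  qed (auto simp: D_ring_def)
next
  fix x y z assume "x \<in> carrier (D_ring A)" "y \<in> carrier (D_ring A)" "z \<in> carrier (D_ring A)"
  then show "(x \<oplus>\<^bsub>D_ring A\<^esub> y) \<otimes>\<^bsub>D_ring A\<^esub> z = x \<otimes>\<^bsub>D_ring A\<^esub> z \<oplus>\<^bsub>D_ring A\<^esub> y \<otimes>\<^bsub>D_ring A\<^esub> z"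
    by (simp add: D_ring_def o_def)
next
  fix x y z assume "x \<in> carrier (D_ring A)" "y \<in> carrier (D_ring A)" "z \<in> carrier (D_ring A)"
  then have "isdo z" by (simp add: D_ring_def DR_iff)
  then show "z \<otimes>\<^bsub>D_ring A\<^esub> (x \<oplus>\<^bsub>D_ring A\<^esub> y) = z \<otimes>\<^bsub>D_ring A\<^esub> x \<oplus>\<^bsub>D_ring A\<^esub> z \<otimes>\<^bsub>D_ring A\<^esub> y"
    by (simp add: D_ring_def o_def) (intro ext, rule isdo_additive[OF \<open>isdo z\<close>])
qed

lemma D_a_inv:
  assumes "P \<in> carrier (D_ring A)"
  shows "\<ominus>\<^bsub>D_ring A\<^esub> P = (\<lambda>f m. - P f m)"
proof -
  interpret ring "D_ring A" by (rule ring_D)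
  have "(\<lambda>f m. - P f m) \<in> carrier (D_ring A)"
    using assms isdo_smult[of P "-1"] by (auto simp: D_ring_def DR_iff R_A_RS intro: RS_neg)
  moreover have "(\<lambda>f m. - P f m) \<oplus>\<^bsub>D_ring A\<^esub> P = \<zero>\<^bsub>D_ring A\<^esub>"
    by (simp add: D_ring_def)
  ultimately show ?thesis using minus_equality assms by blast
qed

inductive pfr :: "(real ^ ('d::finite) \<Rightarrow> complex) \<Rightarrow> bool" where
  pfr_const: "pfr (\<lambda>y. c)"
| pfr_add: "pfr p \<Longrightarrow> pfr q \<Longrightarrow> pfr (\<lambda>y. p y + q y)"
| pfr_mult: "pfr p \<Longrightarrow> pfr q \<Longrightarrow> pfr (\<lambda>y. p y * q y)"
| pfr_coord: "pfr (\<lambda>y. of_real (y $ i))"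

lemma pfr_shift: "pfr p \<Longrightarrow> pfr (\<lambda>y. p (y + z))"
proof (induction rule: pfr.induct)
  case (pfr_const c) then show ?case by (rule pfr.pfr_const)
next
  case (pfr_add p q) then show ?case using pfr.pfr_add by blast
next
  case (pfr_mult p q) then show ?case using pfr.pfr_mult by blast
next
  case (pfr_coord i)
  have "pfr (\<lambda>y. of_real (y $ i) + of_real (z $ i))"
    by (intro pfr.pfr_add pfr.pfr_coord pfr.pfr_const)
  then show ?case by simp
qed

lemma pfr_sum: "finite I \<Longrightarrow> (\<And>i. i \<in> I \<Longrightarrow> pfr (g i)) \<Longrightarrow> pfr (\<lambda>y. \<Sum>i\<in>I. g i y)"
proof (induction I rule: finite_induct)
  case empty then show ?case using pfr_const[of 0] by simp
next
  case (insert x F) then show ?case using pfr_add[of "g x" "\<lambda>y. \<Sum>i\<in>F. g i y"] by simp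
qed

lemma pfr_prod: "finite I \<Longrightarrow> (\<And>i. i \<in> I \<Longrightarrow> pfr (g i)) \<Longrightarrow> pfr (\<lambda>y. \<Prod>i\<in>I. g i y)"
proof (induction I rule: finite_induct)
  case empty then show ?case using pfr_const[of 1] by simp
next
  case (insert x F) then show ?case using pfr_mult[of "g x" "\<lambda>y. \<Prod>i\<in>F. g i y"] by simp
qed

lemma pfr_line: "pfr p \<Longrightarrow> \<exists>q. \<forall>t. p (u + t *\<^sub>R v) = poly q (of_real t)"
proof (induction rule: pfr.induct)
  case (pfr_const c)
  show ?case by (rule exI[of _ "[:c:]"]) simp
next
  case (pfr_add p q)
  then obtain q1 q2 where "\<forall>t. p (u + t *\<^sub>R v) = poly q1 (of_real t)" "\<forall>t. q (u + t *\<^sub>R v) = poly q2 (of_real t)"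
    by blast
  then show ?case by (intro exI[of _ "q1 + q2"]) simp
next
  case (pfr_mult p q)
  then obtain q1 q2 where "\<forall>t. p (u + t *\<^sub>R v) = poly q1 (of_real t)" "\<forall>t. q (u + t *\<^sub>R v) = poly q2 (of_real t)"
    by blast
  then show ?case by (intro exI[of _ "q1 * q2"]) simp
next
  case (pfr_coord i)
  show ?case
    by (rule exI[of _ "[:of_real (u $ i), of_real (v $ i):]"]) (simp add: algebra_simps)
qed

lemma poly_nat_roots:
  fixes q :: "complex poly"
  assumes "\<And>n::nat. poly q (of_nat n) = 0"
  shows "q = 0"
proof (rule ccontr)
  assume "q \<noteq> 0"
  then have "finite {x. poly q x = 0}" by (rule poly_roots_finite)
  moreover have "range (of_nat :: nat \<Rightarrow> complex) \<subseteq> {x. poly q x = 0}" using assms by auto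
  ultimately have "finite (range (of_nat :: nat \<Rightarrow> complex))" by (rule finite_subset[rotated])
  then have "finite (UNIV :: nat set)"
    using finite_imageD[of "of_nat :: nat \<Rightarrow> complex" UNIV] inj_of_nat by blast
  then show False by simp
qed

lemma pfr_density:
  assumes "finite I"
  shows "pfr p \<Longrightarrow> (\<And>k::'i \<Rightarrow> nat. p (w + (\<Sum>i\<in>I. real (k i) *\<^sub>R v i)) = 0)
     \<Longrightarrow> p (w + (\<Sum>i\<in>I. r i *\<^sub>R v i)) = 0"
  using assms
proof (induction I arbitrary: p r rule: finite_induct)
  case empty
  then show ?case by simp
next
  case (insert j I p r)
  have IH: "p (w + (\<Sum>i\<in>I. r i *\<^sub>R v i) + real t *\<^sub>R v j) = 0" for t :: nat
  proof -
    have "pfr (\<lambda>y. p (y + real t *\<^sub>R v j))" by (rule pfr_shift[OF insert.prems(1)])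
    moreover have "p (w + (\<Sum>i\<in>I. real (k i) *\<^sub>R v i) + real t *\<^sub>R v j) = 0" for k :: "'i \<Rightarrow> nat"
    proof -
      have "(\<Sum>i\<in>insert j I. real ((k(j := t)) i) *\<^sub>R v i) = real t *\<^sub>R v j + (\<Sum>i\<in>I. real (k i) *\<^sub>R v i)"
        using insert.hyps by (simp add: sum.insert) (intro sum.cong, auto)
      then show ?thesis using insert.prems(2)[of "k(j := t)"] by (simp add: algebra_simps)
    qed
    ultimately show ?thesis using insert.IH[of "\<lambda>y. p (y + real t *\<^sub>R v j)" r] by simp
  qed
  obtain q where q: "\<forall>t. p ((w + (\<Sum>i\<in>I. r i *\<^sub>R v i)) + t *\<^sub>R v j) = poly q (of_real t)"
    using pfr_line[OF insert.prems(1)] by blast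
  have "q = 0"
  proof (rule poly_nat_roots)
    fix n :: nat
    show "poly q (of_nat n) = 0" using q IH[of n] by (metis of_real_of_nat_eq)
  qed
  then have "p ((w + (\<Sum>i\<in>I. r i *\<^sub>R v i)) + r j *\<^sub>R v j) = 0" using q by simp
  then show ?case using insert.hyps by (simp add: sum.insert algebra_simps)
qed

lemma to_real_add: "to_real (x + y) = to_real x + to_real y"
  by (simp add: to_real_def vec_eq_iff)
lemma to_real_diff: "to_real (x - y) = to_real x - to_real y"
  by (simp add: to_real_def vec_eq_iff)
lemma to_real_neg: "to_real (- x) = - to_real x"
  by (simp add: to_real_def vec_eq_iff)
lemma to_real_zero: "to_real 0 = 0"
  by (simp add: to_real_def vec_eq_iff)
lemma to_real_scale: "to_real (k *s x) = of_int k *\<^sub>R to_real x"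
  by (simp add: to_real_def vec_eq_iff)
lemma to_real_sum: "to_real (\<Sum>a\<in>U. g a) = (\<Sum>a\<in>U. to_real (g a))"
  by (induction U rule: infinite_finite_induct) (auto simp: to_real_zero to_real_add)
lemma to_real_inj: "inj to_real"
  by (auto simp: inj_def to_real_def vec_eq_iff)
lemma to_real_axis: "to_real (axis i 1) = axis i 1"
  by (simp add: to_real_def vec_eq_iff axis_def)
lemma to_real_nth: "to_real z $ i = of_int (z $ i)"
  by (simp add: to_real_def)

lemma DIM_vec: "DIM(real ^ 'd) = CARD('d::finite)"
  by simp

lemma semigrp_add: "x \<in> semigrp A \<Longrightarrow> y \<in> semigrp A \<Longrightarrow> x + y \<in> semigrp A"
proof -
  assume "x \<in> semigrp A" "y \<in> semigrp A"
  then obtain k l where "x = (\<Sum>a\<in>A. int (k a) *s a)" "y = (\<Sum>a\<in>A. int (l a) *s a)"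
    by (auto simp: semigrp_def)
  moreover have "int (k a + l a) *s a = int (k a) *s a + int (l a) *s a" for a
    by (simp add: vec_eq_iff algebra_simps)
  ultimately have eq: "x + y = (\<Sum>a\<in>A. int (k a + l a) *s a)"
    by (simp add: sum.distrib)
  show ?thesis unfolding semigrp_def by (rule CollectI, rule exI, rule eq)
qed

lemma semigrp_zero: "0 \<in> semigrp A"
  unfolding semigrp_def by (rule CollectI, rule exI[of _ "\<lambda>_. 0"]) simp

lemma semigrp_subsum:
  assumes "finite A" "A' \<subseteq> A"
  shows "(\<Sum>a\<in>A'. int (k a) *s a) \<in> semigrp A"
proof -
  have "(\<Sum>a\<in>A'. int (k a) *s a) = (\<Sum>a\<in>A. int (if a \<in> A' then k a else 0) *s a)"
    using assms by (intro sum.mono_neutral_cong_left) auto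
  then show ?thesis by (auto simp: semigrp_def intro!: exI[of _ "\<lambda>a. if a \<in> A' then k a else 0"])
qed

lemma semigrp_gen:
  assumes "finite A" "a \<in> A" shows "a \<in> semigrp A"
  using semigrp_subsum[OF assms(1), of "{a}" "\<lambda>_. 1"] assms(2) by simp

lemma semigrp_nonneg:
  assumes "\<And>a. a \<in> A \<Longrightarrow> h a \<ge> 0"
  shows "(\<Sum>a\<in>A. h a *s a) \<in> semigrp A"
proof -
  have "(\<Sum>a\<in>A. h a *s a) = (\<Sum>a\<in>A. int (nat (h a)) *s a)"
    using assms by (intro sum.cong) auto
  then show ?thesis by (auto simp: semigrp_def intro!: exI[of _ "\<lambda>a. nat (h a)"])
qed

lemma real_cone_sum:
  assumes "finite A" "\<And>a. a \<in> A \<Longrightarrow> c a \<ge> 0"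
  shows "(\<Sum>a\<in>A. c a *\<^sub>R to_real a) \<in> real_cone A"
  using assms unfolding real_cone_def by blast

lemma real_cone_hull:
  assumes "finite A"
  shows "real_cone A = convex_cone hull (to_real ` A)"
proof (rule hull_unique[symmetric])
  show "to_real ` A \<subseteq> real_cone A"
  proof
    fix x assume "x \<in> to_real ` A"
    then obtain a where a: "a \<in> A" "x = to_real a" by blast
    have "(\<Sum>b\<in>A. (if b = a then 1 else 0) *\<^sub>R to_real b) = (\<Sum>b\<in>A. if b = a then to_real b else 0)"
      by (intro sum.cong) auto
    also have "\<dots> = to_real a" using a assms by simp
    finally have "(\<Sum>b\<in>A. (if b = a then 1 else 0) *\<^sub>R to_real b) = to_real a" .
    then show "x \<in> real_cone A"
      using real_cone_sum[OF assms, of "\<lambda>b. if b = a then 1 else 0"] a by simp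
  qed
next
  show "convex_cone (real_cone A)"
    unfolding convex_cone_iff
  proof (intro conjI ballI allI impI)
    show "0 \<in> real_cone A"
      using real_cone_sum[OF assms, of "\<lambda>_. 0"] by simp
  next
    fix x y assume "x \<in> real_cone A" "y \<in> real_cone A"
    then obtain c d where "\<forall>a\<in>A. c a \<ge> 0" "x = (\<Sum>a\<in>A. c a *\<^sub>R to_real a)"
       "\<forall>a\<in>A. d a \<ge> 0" "y = (\<Sum>a\<in>A. d a *\<^sub>R to_real a)"
      unfolding real_cone_def by blast
    moreover have "x + y = (\<Sum>a\<in>A. (c a + d a) *\<^sub>R to_real a)" if "x = (\<Sum>a\<in>A. c a *\<^sub>R to_real a)" "y = (\<Sum>a\<in>A. d a *\<^sub>R to_real a)"
      using that by (simp add: sum.distrib scaleR_add_left)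
    ultimately show "x + y \<in> real_cone A"
      using real_cone_sum[OF assms, of "\<lambda>a. c a + d a"] by auto
  next
    fix x and t :: real assume "x \<in> real_cone A" "0 \<le> t"
    then obtain c where "\<forall>a\<in>A. c a \<ge> 0" "x = (\<Sum>a\<in>A. c a *\<^sub>R to_real a)"
      unfolding real_cone_def by blast
    moreover have "t *\<^sub>R x = (\<Sum>a\<in>A. (t * c a) *\<^sub>R to_real a)" if "x = (\<Sum>a\<in>A. c a *\<^sub>R to_real a)"
      using that by (simp add: scaleR_sum_right)
    ultimately show "t *\<^sub>R x \<in> real_cone A"
      using real_cone_sum[OF assms, of "\<lambda>a. t * c a"] \<open>0 \<le> t\<close> by auto
  qed
next
  fix T assume T1: "to_real ` A \<subseteq> T" and T: "convex_cone T"
  show "real_cone A \<subseteq> T"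
  proof
    fix x assume "x \<in> real_cone A"
    then obtain c where c: "\<forall>a\<in>A. c a \<ge> 0" "x = (\<Sum>a\<in>A. c a *\<^sub>R to_real a)"
      unfolding real_cone_def by blast
    have "(\<Sum>a\<in>B. c a *\<^sub>R to_real a) \<in> T" if "B \<subseteq> A" for B
      using finite_subset[OF that assms] that
    proof (induction B rule: finite_induct)
      case empty then show ?case using T by (simp add: convex_cone_contains_0)
    next
      case (insert b B)
      then have "c b *\<^sub>R to_real b \<in> T" using T T1 c unfolding convex_cone_iff by blast
      moreover have "(\<Sum>a\<in>B. c a *\<^sub>R to_real a) \<in> T" using insert by blast
      ultimately show ?case using T insert.hyps unfolding convex_cone_iff by simp
    qed
    then show "x \<in> T" using c by blast
  qed
qed

lemma polyhedron_real_cone: "finite A \<Longrightarrow> polyhedron (real_cone A)"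
  by (simp add: real_cone_hull polyhedron_convex_cone_hull)

lemma real_cone_gen: "finite A \<Longrightarrow> a \<in> A \<Longrightarrow> to_real a \<in> real_cone A"
  by (simp add: real_cone_hull hull_inc)

lemma real_cone_zero: "finite A \<Longrightarrow> 0 \<in> real_cone A"
  by (simp add: real_cone_hull convex_cone_hull_contains_0)

lemma real_cone_add: "finite A \<Longrightarrow> x \<in> real_cone A \<Longrightarrow> y \<in> real_cone A \<Longrightarrow> x + y \<in> real_cone A"
  by (simp add: real_cone_hull convex_cone_hull_add)

lemma real_cone_mul: "finite A \<Longrightarrow> x \<in> real_cone A \<Longrightarrow> 0 \<le> t \<Longrightarrow> t *\<^sub>R x \<in> real_cone A"
  by (simp add: real_cone_hull convex_cone_hull_mul)

lemma semigrp_cone: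
  assumes "finite A" "m \<in> semigrp A" shows "to_real m \<in> real_cone A"
proof -
  obtain k where "m = (\<Sum>a\<in>A. int (k a) *s a)" using assms by (auto simp: semigrp_def)
  then have "to_real m = (\<Sum>a\<in>A. real (k a) *\<^sub>R to_real a)"
    by (simp add: to_real_sum to_real_scale)
  then show ?thesis using real_cone_sum[OF assms(1), of "\<lambda>a. real (k a)"] by simp
qed

lemma grp_span:
  assumes "grp A = UNIV" shows "span (to_real ` A) = UNIV"
proof -
  have "axis i 1 \<in> span (to_real ` A)" for i
  proof -
    have "axis i (1::int) \<in> grp A" using assms by simp
    then obtain k where k: "axis i (1::int) = (\<Sum>a\<in>A. k a *s a)" by (auto simp: grp_def)
    have "axis i (1::real) = (\<Sum>a\<in>A. of_int (k a) *\<^sub>R to_real a)"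
      using arg_cong[OF k, of to_real] by (simp add: to_real_sum to_real_scale to_real_axis)
    also have "\<dots> \<in> span (to_real ` A)"
      by (intro span_sum span_mul span_base) auto
    finally show ?thesis .
  qed
  then have "Basis \<subseteq> span (to_real ` A)" by (auto simp: Basis_vec_def cart_basis_def)
  then have "span Basis \<subseteq> span (to_real ` A)" by (metis span_minimal subspace_span)
  then show ?thesis by (auto simp: span_Basis)
qed

lemma affine_hull_cone:
  assumes "finite A" "grp A = UNIV" shows "affine hull (real_cone A) = UNIV"
proof -
  have "0 \<in> affine hull (real_cone A)" by (rule hull_inc[OF real_cone_zero[OF assms(1)]])
  then have "affine hull (real_cone A) = span (real_cone A)" by (rule affine_hull_span_0)
  moreover have "span (to_real ` A) \<subseteq> span (real_cone A)"
    by (intro span_mono) (auto intro: real_cone_gen[OF assms(1)])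
  ultimately show ?thesis using grp_span[OF assms(2)] by auto
qed

lemma lin_prop:
  fixes f g :: "real ^ 'd \<Rightarrow> real"
  assumes "linear f" "linear g" "\<And>x. f x = 0 \<Longrightarrow> g x = 0" "f w = 1"
  shows "g x = g w * f x"
proof -
  have "f (x - f x *\<^sub>R w) = 0"
    using assms by (simp add: linear_diff linear_scale)
  then have "g (x - f x *\<^sub>R w) = 0" by (rule assms(3))
  then show ?thesis using assms(2) by (simp add: linear_diff linear_scale)
qed

lemma det_Ints:
  fixes A :: "real ^ 'n ^ 'n"
  assumes "\<And>i j. A $ i $ j \<in> \<int>"
  shows "det A \<in> \<int>"
  unfolding det_def
  by (intro Ints_sum Ints_mult Ints_prod assms) auto

lemma row_eq: "row i A = A $ i"
  by (simp add: row_def vec_nth_inverse)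

lemma int_form:
  fixes a :: "real ^ 'd" and Z :: "(int ^ 'd) set"
  assumes a: "a \<noteq> 0" and Zsub: "to_real ` Z \<subseteq> {x. a \<bullet> x = 0}"
    and Zspan: "{x. a \<bullet> x = 0} \<subseteq> span (to_real ` Z)"
  shows "\<exists>\<phi> :: real ^ 'd \<Rightarrow> real. linear \<phi> \<and> (\<forall>z. \<phi> (to_real z) \<in> \<int>) \<and> (\<forall>x. a \<bullet> x = 0 \<longrightarrow> \<phi> x = 0) \<and> \<phi> a \<noteq> 0"
proof -
  let ?H = "{x. a \<bullet> x = 0}"
  have sH: "subspace ?H" by (rule subspace_hyperplane)
  have spanZ: "span (to_real ` Z) = ?H"
    using span_minimal[OF Zsub sH] Zspan by blast
  obtain B where B: "B \<subseteq> to_real ` Z" "independent B" "to_real ` Z \<subseteq> span B" "card B = dim (to_real ` Z)"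
    by (rule basis_exists)
  have spanB: "span B = ?H"
  proof
    show "span B \<subseteq> ?H" using span_mono[OF B(1)] spanZ by blast
    show "?H \<subseteq> span B" using span_mono[OF B(3)] spanZ by (simp add: span_span)
  qed
  have cardB: "card B = CARD('d) - 1"
    using B(4) dim_span[of "to_real ` Z"] spanZ dim_hyperplane[OF a] by simp
  have finB: "finite B" using B(2) by (rule finiteI_independent)
  obtain j0 :: 'd where True by blast
  have cc: "card (UNIV - {j0}) = card B" using cardB by (simp add: card_Diff_singleton)
  have fU: "finite (UNIV - {j0})" by simp
  obtain \<beta> where bij: "bij_betw \<beta> (UNIV - {j0}) B"
    using finite_same_card_bij[OF fU finB cc] by (elim exE)
  define M where "M x = (\<chi> i. if i = j0 then x else \<beta> i)" for x :: "real ^ 'd"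
  define \<phi> where "\<phi> x = det (M x)" for x
  have lin: "linear \<phi>"
  proof (rule linearI)
    fix x y
    show "\<phi> (x + y) = \<phi> x + \<phi> y"
      using det_row_add[of j0 "\<lambda>_. x" "\<lambda>_. y" \<beta>] by (simp add: \<phi>_def M_def)
  next
    fix c :: real and x
    show "\<phi> (c *\<^sub>R x) = c *\<^sub>R \<phi> x"
    proof -
      have "c *s x = c *\<^sub>R x" by (simp add: vec_eq_iff)
      then show ?thesis using det_row_mul[of j0 c "\<lambda>_. x" \<beta>] unfolding \<open>c *s x = c *\<^sub>R x\<close> by (simp add: \<phi>_def M_def)
    qed
  qed
  have Bint: "b \<in> B \<Longrightarrow> b $ k \<in> \<int>" for b k
    using B(1) by (auto simp: to_real_nth)
  have int: "\<phi> (to_real z) \<in> \<int>" for z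
    unfolding \<phi>_def
  proof (rule det_Ints)
    fix i j
    show "M (to_real z) $ i $ j \<in> \<int>"
    proof (cases "i = j0")
      case True then show ?thesis by (simp add: M_def to_real_nth)
    next
      case False
      then have "\<beta> i \<in> B" using bij by (auto simp: bij_betw_def)
      then show ?thesis using False Bint by (simp add: M_def)
    qed
  qed
  have vanB: "\<phi> b = 0" if "b \<in> B" for b
  proof -
    obtain j where j: "j \<in> UNIV - {j0}" "b = \<beta> j"
      using bij \<open>b \<in> B\<close> by (auto simp: bij_betw_def)
    have "row j (M b) = row j0 (M b)" using j by (simp add: row_eq M_def)
    then show ?thesis unfolding \<phi>_def using j by (intro det_identical_rows[of j j0]) auto
  qed
  have van: "\<forall>x. a \<bullet> x = 0 \<longrightarrow> \<phi> x = 0"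
  proof (intro allI impI)
    fix x assume "a \<bullet> x = 0"
    then have "x \<in> span B" using spanB by simp
    then show "\<phi> x = 0" using linear_eq_0_on_span[OF lin vanB] by blast
  qed
  have nz: "\<phi> a \<noteq> 0"
  proof -
    have rows: "rows (M a) = insert a B"
    proof -
      have "rows (M a) = {M a $ i |i. i \<in> UNIV}" by (simp add: rows_def row_eq)
      also have "\<dots> = insert a (\<beta> ` (UNIV - {j0}))" by (auto simp: M_def)
      also have "\<dots> = insert a B" using bij by (simp add: bij_betw_def)
      finally show ?thesis .
    qed
    have aB: "a \<notin> span B" using spanB a by simp
    then have aB': "a \<notin> B" using span_base by blast
    have ind: "independent (insert a B)" using aB B(2) by (rule independent_insertI)
    have "dim (rows (M a)) = card (insert a B)" unfolding rows by (rule dim_eq_card_independent[OF ind])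
    also have "\<dots> = CARD('d)" using aB' finB cardB by simp
    finally have "rank (M a) = CARD('d)" by (simp add: row_rank_def)
    then show ?thesis unfolding \<phi>_def using det_eq_0_rank[of "M a"] by simp
  qed
  show ?thesis by (rule exI[of _ \<phi>]) (use lin int van nz in blast)
qed

lemma norm_form:
  fixes \<phi> :: "real ^ 'd \<Rightarrow> real"
  assumes lin: "linear \<phi>" and int: "\<And>z. \<phi> (to_real z) \<in> \<int>" and nz: "\<phi> x0 \<noteq> 0"
  shows "\<exists>g::int. g > 0 \<and> (\<forall>z. \<exists>q::int. \<phi> (to_real z) = of_int (g * q)) \<and> (\<exists>z. \<phi> (to_real z) = of_int g)"
proof -
  define \<Gamma> where "\<Gamma> = {k::int. \<exists>z. \<phi> (to_real z) = of_int k}"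
  have intz: "\<exists>k. \<phi> (to_real z) = of_int k" for z using int[of z] by (auto elim: Ints_cases)
  have clos: "k1 - t * k2 \<in> \<Gamma>" if k12: "k1 \<in> \<Gamma>" "k2 \<in> \<Gamma>" for k1 k2 t
  proof -
    obtain z1 where "\<phi> (to_real z1) = of_int k1" using k12(1) unfolding \<Gamma>_def by blast
    moreover obtain z2 where "\<phi> (to_real z2) = of_int k2" using k12(2) unfolding \<Gamma>_def by blast
    ultimately have "\<phi> (to_real (z1 - t *s z2)) = of_int (k1 - t * k2)"
      using lin by (simp add: to_real_diff to_real_scale linear_diff linear_scale)
    then show ?thesis by (auto simp: \<Gamma>_def)
  qed
  have zero: "0 \<in> \<Gamma>" using lin by (auto simp: \<Gamma>_def intro!: exI[of _ 0] simp: to_real_zero linear_0)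
  have "\<exists>z. \<phi> (to_real z) \<noteq> 0"
  proof (rule ccontr)
    assume "\<not> ?thesis"
    then have "\<phi> b = 0" if "b \<in> Basis" for b
      using that by (auto simp: Basis_vec_def to_real_axis[symmetric])
    then have "\<phi> x0 = 0" using linear_eq_0_on_span[OF lin, of Basis x0] by (simp add: span_Basis)
    then show False using nz by simp
  qed
  then obtain z k where zk: "\<phi> (to_real z) = of_int k" "k \<noteq> 0" using intz by fastforce
  then have "k \<in> \<Gamma>" by (auto simp: \<Gamma>_def)
  then have kabs: "\<bar>k\<bar> \<in> \<Gamma>" using clos[OF zero \<open>k \<in> \<Gamma>\<close>, of 1] by (cases "k \<ge> 0") auto
  define P where "P n \<longleftrightarrow> 0 < n \<and> int n \<in> \<Gamma>" for n :: nat
  have "P (nat \<bar>k\<bar>)" using kabs zk by (simp add: P_def)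
  define g where "g = int (LEAST n. P n)"
  have gP: "P (LEAST n. P n)" by (rule LeastI) fact
  then have gpos: "g > 0" and gG: "g \<in> \<Gamma>" by (auto simp: P_def g_def)
  have mult: "\<exists>q. \<phi> (to_real z) = of_int (g * q)" for z
  proof -
    obtain k where k: "\<phi> (to_real z) = of_int k" using intz by blast
    then have kG: "k \<in> \<Gamma>" by (auto simp: \<Gamma>_def)
    have rG: "k mod g \<in> \<Gamma>" using clos[OF kG gG, of "k div g"] by (metis minus_div_mult_eq_mod mult.commute)
    have "k mod g = 0"
    proof (rule ccontr)
      assume "k mod g \<noteq> 0"
      moreover have "k mod g \<ge> 0" using gpos by simp
      ultimately have "k mod g > 0" by linarith
      then have "P (nat (k mod g))" using rG by (simp add: P_def)
      then have "(LEAST n. P n) \<le> nat (k mod g)" by (rule Least_le)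
      then have "g \<le> k mod g" using \<open>k mod g > 0\<close> unfolding g_def by linarith
      moreover have "k mod g < g" using gpos by simp
      ultimately show False by linarith
    qed
    then have "g dvd k" by (simp add: dvd_eq_mod_eq_0)
    then obtain q where "k = g * q" by (elim dvdE)
    then show ?thesis using k by (intro exI[of _ q]) simp
  qed
  show ?thesis using gpos mult gG by (auto simp: \<Gamma>_def)
qed

lemma facet_form:
  fixes A :: "(int ^ 'd) set" and a :: "real ^ 'd"
  assumes fin: "finite A" and grp: "grp A = UNIV" and a: "a \<noteq> 0"
    and Kle: "real_cone A \<subseteq> {x. a \<bullet> x \<le> b}" and sig: "\<sigma> = real_cone A \<inter> {x. a \<bullet> x = b}"
    and fac: "\<sigma> facet_of real_cone A"
  shows "b = 0 \<and> (\<exists>c>0. Fform A \<sigma> = (\<lambda>x. c * - (a \<bullet> x)))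
    \<and> {x. a \<bullet> x = 0} \<subseteq> span (to_real ` {a'\<in>A. a \<bullet> to_real a' = 0})"
proof -
  let ?K = "real_cone A"
  let ?A' = "{a'\<in>A. a \<bullet> to_real a' = 0}"
  let ?H = "{x. a \<bullet> x = 0}"
  have K0: "0 \<in> ?K" by (rule real_cone_zero[OF fin])
  have b0: "b = 0"
  proof -
    have "0 \<le> b" using Kle K0 by auto
    obtain x where x: "x \<in> \<sigma>" using fac by (auto simp: facet_of_def)
    then have "x \<in> ?K" "a \<bullet> x = b" using sig by auto
    then have "2 *\<^sub>R x \<in> ?K" by (intro real_cone_mul[OF fin]) auto
    then have "a \<bullet> (2 *\<^sub>R x) \<le> b" using Kle by auto
    then show ?thesis using \<open>0 \<le> b\<close> \<open>a \<bullet> x = b\<close> by simp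
  qed
  have Kle0: "a \<bullet> x \<le> 0" if "x \<in> ?K" for x using Kle b0 that by auto
  have A'sig: "to_real ` ?A' \<subseteq> \<sigma>" using sig b0 real_cone_gen[OF fin] by auto
  have sigspan: "\<sigma> \<subseteq> span (to_real ` ?A')"
  proof
    fix x assume "x \<in> \<sigma>"
    then have xK: "x \<in> ?K" and ax: "a \<bullet> x = 0" using sig b0 by auto
    obtain c where c: "\<forall>a'\<in>A. c a' \<ge> 0" "x = (\<Sum>a'\<in>A. c a' *\<^sub>R to_real a')"
      using xK unfolding real_cone_def by blast
    have term_le: "c a' * (a \<bullet> to_real a') \<le> 0" if "a' \<in> A" for a'
      using c(1) that Kle0[OF real_cone_gen[OF fin that]] by (simp add: mult_nonneg_nonpos)
    have "(\<Sum>a'\<in>A. - (c a' * (a \<bullet> to_real a'))) = - (a \<bullet> x)"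
      using c(2) by (simp add: inner_sum_right sum_negf)
    then have "(\<Sum>a'\<in>A. - (c a' * (a \<bullet> to_real a'))) = 0" using ax by simp
    then have zero: "\<forall>a'\<in>A. - (c a' * (a \<bullet> to_real a')) = 0"
      using sum_nonneg_eq_0_iff[OF fin, of "\<lambda>a'. - (c a' * (a \<bullet> to_real a'))"] term_le by force
    have "c a' *\<^sub>R to_real a' \<in> span (to_real ` ?A')" if "a' \<in> A" for a'
    proof (cases "a' \<in> ?A'")
      case True then show ?thesis by (intro span_mul span_base) auto
    next
      case False then have "c a' = 0" using zero that by auto
      then show ?thesis by (simp add: span_zero)
    qed
    then show "x \<in> span (to_real ` ?A')" unfolding c(2) by (intro span_sum) auto
  qed
  have sH: "subspace ?H" by (rule subspace_hyperplane)
  have spanH: "span (to_real ` ?A') \<subseteq> ?H" by (rule span_minimal) (auto intro: sH)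
  have affK: "aff_dim ?K = int CARD('d)"
    using affine_hull_cone[OF fin grp] aff_dim_eq_full[of ?K] by simp
  have sig0: "0 \<in> \<sigma>" using sig b0 K0 by simp
  have "aff_dim \<sigma> = int (dim \<sigma>)" using sig0 by (intro aff_dim_zero hull_inc)
  moreover have "aff_dim \<sigma> = int CARD('d) - 1" using fac affK by (simp add: facet_of_def)
  ultimately have dsig: "dim \<sigma> = CARD('d) - 1" by linarith
  have "dim \<sigma> \<le> dim (span (to_real ` ?A'))" using sigspan by (rule dim_subset)
  then have "dim ?H \<le> dim (span (to_real ` ?A'))" using dsig dim_hyperplane[OF a] by simp
  then have spanEq: "span (to_real ` ?A') = ?H"
    using subspace_dim_equal[OF subspace_span sH spanH] by simp
  then have part3: "?H \<subseteq> span (to_real ` ?A')" by simp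
  obtain \<phi> :: "real ^ 'd \<Rightarrow> real" where \<phi>: "linear \<phi>" "\<forall>z. \<phi> (to_real z) \<in> \<int>" "\<forall>x. a \<bullet> x = 0 \<longrightarrow> \<phi> x = 0" "\<phi> a \<noteq> 0"
    using int_form[OF a, of ?A'] spanEq by auto
  define w0 where "w0 = (- (1 / (a \<bullet> a))) *\<^sub>R a"
  have aa: "a \<bullet> a \<noteq> 0" using a by simp
  have f0w0: "- (a \<bullet> w0) = 1" using aa by (simp add: w0_def)
  have linf0: "linear (\<lambda>x. - (a \<bullet> x))" by (intro linearI) (auto simp: inner_add_right)
  define lamb where "lamb = \<phi> w0"
  have phi_eq: "\<phi> x = lamb * - (a \<bullet> x)" for x
    unfolding lamb_def using lin_prop[OF linf0 \<phi>(1), of w0 x] \<phi>(3) f0w0 by auto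
  have lnz: "lamb \<noteq> 0" using \<phi>(4) phi_eq[of a] by auto
  obtain g :: int where g: "g > 0" "\<forall>z. \<exists>q::int. \<phi> (to_real z) = of_int (g * q)" "\<exists>z. \<phi> (to_real z) = of_int g"
    using norm_form[OF \<phi>(1) _ \<phi>(4)] \<phi>(2) by blast
  obtain zg where zg: "\<phi> (to_real zg) = of_int g" using g(3) by blast
  define sg :: int where "sg = (if lamb > 0 then 1 else -1)"
  define c where "c = \<bar>lamb\<bar> / of_int g"
  have cpos: "c > 0" using lnz g(1) by (simp add: c_def)
  define F where "F = (\<lambda>x. c * - (a \<bullet> x))"
  have F_phi: "F x = of_int sg * \<phi> x / of_int g" for x
    using lnz by (auto simp: F_def c_def phi_eq sg_def abs_if)
  have linF: "linear F" unfolding F_def by (intro linearI) (auto simp: inner_add_right algebra_simps)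
  have FK: "\<forall>x\<in>?K. F x \<ge> 0"
  proof
    fix x assume "x \<in> ?K"
    then have "a \<bullet> x \<le> 0" by (rule Kle0)
    then show "F x \<ge> 0" using cpos by (simp add: F_def mult_nonneg_nonpos less_imp_le)
  qed
  have Fsig: "\<forall>x\<in>\<sigma>. F x = 0" using sig b0 by (auto simp: F_def)
  have Fscale: "F (to_real (t *s z)) = of_int t * F (to_real z)" for t z
    using linF by (simp add: to_real_scale linear_scale)
  have Frange: "range (\<lambda>m. F (to_real m)) = \<int>"
  proof
    show "range (\<lambda>m. F (to_real m)) \<subseteq> \<int>"
    proof
      fix y assume "y \<in> range (\<lambda>m. F (to_real m))"
      then obtain z where y: "y = F (to_real z)" by blast
      obtain q where "\<phi> (to_real z) = of_int (g * q)" using g(2) by blast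
      then have "y = of_int (sg * q)" using y F_phi g(1) by simp
      then show "y \<in> \<int>" by simp
    qed
  next
    show "\<int> \<subseteq> range (\<lambda>m. F (to_real m))"
    proof
      fix y :: real assume "y \<in> \<int>"
      then obtain j where j: "y = of_int j" by (auto elim: Ints_cases)
      have "F (to_real zg) = of_int sg" using F_phi zg g(1) by simp
      then have "F (to_real ((sg * j) *s zg)) = of_int (sg * j * sg)" using Fscale by simp
      also have "sg * j * sg = j" by (auto simp: sg_def)
      finally show "y \<in> range (\<lambda>m. F (to_real m))" using j by (metis rangeI)
    qed
  qed
  have linear_inner_a: "linear (\<lambda>x. a \<bullet> x)" by (intro linearI) (auto simp: inner_add_right)
  have Apos: "\<exists>a0\<in>A. F (to_real a0) > 0"
  proof (rule ccontr)
    assume "\<not> ?thesis"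
    then have "\<forall>a0\<in>A. a \<bullet> to_real a0 = 0"
      using FK real_cone_gen[OF fin] cpos by (force simp: F_def)
    then have "a \<bullet> x = 0" if "x \<in> span (to_real ` A)" for x
      using linear_eq_0_on_span[OF linear_inner_a _ that] by auto
    then have "a \<bullet> a = 0" using grp_span[OF grp] by auto
    then show False using aa by simp
  qed
  have uniq: "G = F" if G: "linear G" "\<forall>x\<in>?K. G x \<ge> 0" "\<forall>x\<in>\<sigma>. G x = 0" "range (\<lambda>m. G (to_real m)) = \<int>" for G
  proof -
    have GH: "G x = 0" if "a \<bullet> x = 0" for x
    proof -
      have "x \<in> span (to_real ` ?A')" using that spanEq by simp
      then show ?thesis using linear_eq_0_on_span[OF G(1), of "to_real ` ?A'"] A'sig G(3) by blast
    qed
    define w1 where "w1 = (1 / c) *\<^sub>R w0"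
    have Fw1: "F w1 = 1" using cpos f0w0 by (simp add: F_def w1_def)
    define \<mu> where "\<mu> = G w1"
    have GF: "G x = \<mu> * F x" for x
      unfolding \<mu>_def by (rule lin_prop[OF linF G(1) _ Fw1]) (use cpos GH in \<open>auto simp: F_def\<close>)
    have "1 \<in> range (\<lambda>m. G (to_real m))" using G(4) by simp
    then obtain z where z: "G (to_real z) = 1" by auto
    have "F (to_real z) \<in> \<int>" using Frange by auto
    then obtain q where q: "F (to_real z) = of_int q" by (auto elim: Ints_cases)
    have "1 \<in> range (\<lambda>m. F (to_real m))" using Frange by simp
    then obtain z' where z': "F (to_real z') = 1" by auto
    have "G (to_real z') \<in> \<int>" using G(4) by auto
    then obtain p where p: "\<mu> = of_int p" using GF[of "to_real z'"] z' by (auto elim: Ints_cases)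
    have "of_int (p * q) = (1::real)" using z GF[of "to_real z"] p q by simp
    then have "p * q = 1" by linarith
    then have "p = 1 \<or> p = -1" by (auto simp: zmult_eq_1_iff)
    moreover obtain a0 where a0: "a0 \<in> A" "F (to_real a0) > 0" using Apos by blast
    moreover have "G (to_real a0) \<ge> 0" using G(2) real_cone_gen[OF fin a0(1)] by blast
    ultimately have "p = 1" using GF[of "to_real a0"] p by (auto simp: mult_less_0_iff)
    then show "G = F" using GF p by (intro ext) simp
  qed
  have "Fform A \<sigma> = F"
    unfolding Fform_def
    by (rule the_equality) (use linF FK Fsig Frange uniq in blast)+
  then show ?thesis using b0 cpos part3 unfolding F_def by blast
qed

lemma facet_props:
  fixes A :: "(int ^ 'd) set"
  assumes fin: "finite A" and grp: "grp A = UNIV" and fac: "\<sigma> facet_of real_cone A"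
  shows "\<exists>A'\<subseteq>A. linear (Fform A \<sigma>) \<and> (\<forall>x\<in>real_cone A. Fform A \<sigma> x \<ge> 0)
     \<and> (\<forall>a\<in>A'. Fform A \<sigma> (to_real a) = 0) \<and> {x. Fform A \<sigma> x = 0} \<subseteq> span (to_real ` A')"
proof -
  obtain a b where ab: "a \<noteq> 0" "real_cone A \<subseteq> {x. a \<bullet> x \<le> b}" "\<sigma> = real_cone A \<inter> {x. a \<bullet> x = b}"
    using facet_of_polyhedron[OF polyhedron_real_cone[OF fin] fac] by metis
  from facet_form[OF fin grp ab fac] obtain c where
    b0: "b = 0" and c: "c > 0" "Fform A \<sigma> = (\<lambda>x. c * - (a \<bullet> x))"
    and sp: "{x. a \<bullet> x = 0} \<subseteq> span (to_real ` {a'\<in>A. a \<bullet> to_real a' = 0})"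
    by blast
  have "linear (Fform A \<sigma>)" unfolding c(2) by (intro linearI) (auto simp: inner_add_right algebra_simps)
  moreover have "\<forall>x\<in>real_cone A. Fform A \<sigma> x \<ge> 0"
  proof
    fix x assume "x \<in> real_cone A"
    then have "a \<bullet> x \<le> 0" using ab(2) b0 by auto
    then show "Fform A \<sigma> x \<ge> 0" using c by (simp add: mult_nonneg_nonpos less_imp_le)
  qed
  moreover have "\<forall>a'\<in>{a'\<in>A. a \<bullet> to_real a' = 0}. Fform A \<sigma> (to_real a') = 0" using c by simp
  moreover have "{x. Fform A \<sigma> x = 0} \<subseteq> span (to_real ` {a'\<in>A. a \<bullet> to_real a' = 0})"
    using sp c by auto
  ultimately show ?thesis by (intro exI[of _ "{a'\<in>A. a \<bullet> to_real a' = 0}"]) auto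
qed

lemma outside_cone:
  fixes A :: "(int ^ 'd) set"
  assumes fin: "finite A" and grp: "grp A = UNIV" and x: "x \<notin> real_cone A"
  shows "\<exists>\<sigma>. \<sigma> facet_of real_cone A \<and> Fform A \<sigma> x < 0"
proof -
  let ?K = "real_cone A"
  obtain Fs where Fs: "finite Fs" "?K = affine hull ?K \<inter> \<Inter>Fs"
    and faces: "\<And>h. h \<in> Fs \<Longrightarrow> \<exists>a b. a \<noteq> 0 \<and> h = {x. a \<bullet> x \<le> b}"
    and min: "\<And>F'. F' \<subset> Fs \<Longrightarrow> ?K \<subset> (affine hull ?K) \<inter> \<Inter>F'"
    using polyhedron_real_cone[OF fin] by (simp add: polyhedron_Int_affine_minimal) meson
  then obtain a b where ab: "\<And>h. h \<in> Fs \<Longrightarrow> a h \<noteq> 0 \<and> h = {x. a h \<bullet> x \<le> b h}"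
    by metis
  have "x \<notin> \<Inter>Fs" using x Fs(2) affine_hull_cone[OF fin grp] by auto
  then obtain h where h: "h \<in> Fs" "x \<notin> h" by blast
  have fac: "(?K \<inter> {x. a h \<bullet> x = b h}) facet_of ?K"
    using facet_of_polyhedron_explicit[OF Fs(1) Fs(2) ab min] h(1) by blast
  have Ksub: "?K \<subseteq> {x. a h \<bullet> x \<le> b h}" using Fs(2) h(1) ab[OF h(1)] by blast
  from facet_form[OF fin grp _ Ksub refl fac] ab[OF h(1)] obtain c where
    "b h = 0" "c > 0" "Fform A (?K \<inter> {x. a h \<bullet> x = b h}) = (\<lambda>x. c * - (a h \<bullet> x))"
    by blast
  moreover have "a h \<bullet> x > b h" using h ab[OF h(1)] by auto
  ultimately show ?thesis using fac by (intro exI[of _ "?K \<inter> {x. a h \<bullet> x = b h}"]) (auto simp: mult_pos_pos)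
qed

lemma int_vec_expand: "(y :: int ^ 'd) = (\<Sum>i\<in>UNIV. (y $ i) *s axis i 1)"
proof -
  have "(\<Sum>x\<in>UNIV. y $ x * (if j = x then 1 else 0)) = (\<Sum>x\<in>UNIV. if j = x then y $ x else 0)" for j
    by (intro sum.cong) auto
  then show ?thesis by (simp add: vec_eq_iff sum_component axis_def)
qed

lemma conductor:
  fixes A :: "(int ^ 'd) set"
  assumes fin: "finite A" and grp: "grp A = UNIV"
  shows "\<exists>c0\<in>semigrp A. \<forall>m. to_real m \<in> real_cone A \<longrightarrow> m + c0 \<in> semigrp A"
proof -
  have "\<forall>i. \<exists>k. axis i (1::int) = (\<Sum>a\<in>A. k a *s a)"
    using grp by (auto simp: grp_def set_eq_iff)
  then obtain kk where kk: "\<And>i. axis i (1::int) = (\<Sum>a\<in>A. kk i a *s a)" by metis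
  define L :: int where "L = (\<Sum>i\<in>UNIV. \<Sum>a\<in>A. \<bar>a $ i\<bar>)"
  define N :: int where "N = L * (\<Sum>i\<in>UNIV. \<Sum>a\<in>A. \<bar>kk i a\<bar>)"
  have L0: "L \<ge> 0" by (simp add: L_def sum_nonneg)
  have N0: "N \<ge> 0" by (simp add: N_def L0 sum_nonneg)
  define c0 where "c0 = (\<Sum>a\<in>A. N *s a)"
  have c0: "c0 \<in> semigrp A" unfolding c0_def by (rule semigrp_nonneg) (use N0 in auto)
  have "m + c0 \<in> semigrp A" if m: "to_real m \<in> real_cone A" for m
  proof -
    obtain lm where lam: "\<forall>a\<in>A. lm a \<ge> 0" "to_real m = (\<Sum>a\<in>A. lm a *\<^sub>R to_real a)"
      using m unfolding real_cone_def by blast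
    define fl where "fl a = \<lfloor>lm a\<rfloor>" for a
    have fl0: "fl a \<ge> 0" if "a \<in> A" for a using lam(1) that by (simp add: fl_def)
    define y where "y = m - (\<Sum>a\<in>A. fl a *s a)"
    have ty: "to_real y = (\<Sum>a\<in>A. (lm a - of_int (fl a)) *\<^sub>R to_real a)"
      by (simp add: y_def to_real_diff to_real_sum to_real_scale lam(2) scaleR_diff_left sum_subtractf)
    have yb: "\<bar>y $ i\<bar> \<le> L" for i
    proof -
      have "of_int (y $ i) = (\<Sum>a\<in>A. (lm a - of_int (fl a)) * of_int (a $ i))"
        using arg_cong[OF ty, of "\<lambda>v. v $ i"] by (simp add: to_real_nth sum_component)
      then have "\<bar>real_of_int (y $ i)\<bar> \<le> (\<Sum>a\<in>A. \<bar>(lm a - of_int (fl a)) * of_int (a $ i)\<bar>)"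
        by (metis sum_abs)
      also have "\<dots> \<le> (\<Sum>a\<in>A. \<bar>real_of_int (a $ i)\<bar>)"
      proof (rule sum_mono)
        fix a assume "a \<in> A"
        have "0 \<le> lm a - of_int (fl a)" "lm a - of_int (fl a) \<le> 1" by (simp_all add: fl_def) linarith
        then show "\<bar>(lm a - of_int (fl a)) * of_int (a $ i)\<bar> \<le> \<bar>real_of_int (a $ i)\<bar>"
          by (simp add: abs_mult mult_left_le_one_le)
      qed
      finally have "real_of_int \<bar>y $ i\<bar> \<le> real_of_int (\<Sum>a\<in>A. \<bar>a $ i\<bar>)" by simp
      then have "\<bar>y $ i\<bar> \<le> (\<Sum>a\<in>A. \<bar>a $ i\<bar>)" by (simp only: of_int_le_iff)
      also have "\<dots> \<le> L" unfolding L_def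
        by (rule member_le_sum) (auto intro: sum_nonneg)
      finally show ?thesis .
    qed
    define h where "h a = (\<Sum>i\<in>UNIV. y $ i * kk i a)" for a
    have yh: "y = (\<Sum>a\<in>A. h a *s a)"
    proof -
      have "y = (\<Sum>i\<in>UNIV. (y $ i) *s (\<Sum>a\<in>A. kk i a *s a))"
        using int_vec_expand[of y] kk by simp
      also have "\<dots> = (\<Sum>i\<in>UNIV. \<Sum>a\<in>A. (y $ i * kk i a) *s a)"
        by (simp add: vec_eq_iff sum_component sum_distrib_left mult.assoc)
      also have "\<dots> = (\<Sum>a\<in>A. h a *s a)"
        by (subst sum.swap) (simp add: h_def vec_eq_iff sum_component sum_distrib_right)
      finally show ?thesis .
    qed
    have hb: "\<bar>h a\<bar> \<le> N" if "a \<in> A" for a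
    proof -
      have "\<bar>h a\<bar> \<le> (\<Sum>i\<in>UNIV. \<bar>y $ i * kk i a\<bar>)" unfolding h_def by (rule sum_abs)
      also have "\<dots> \<le> (\<Sum>i\<in>UNIV. L * \<bar>kk i a\<bar>)"
        by (rule sum_mono) (simp add: abs_mult mult_right_mono yb)
      also have "\<dots> = L * (\<Sum>i\<in>UNIV. \<bar>kk i a\<bar>)" by (simp add: sum_distrib_left)
      also have "\<dots> \<le> L * (\<Sum>i\<in>UNIV. \<Sum>a\<in>A. \<bar>kk i a\<bar>)"
        by (intro mult_left_mono sum_mono L0 member_le_sum) (use that fin in auto)
      finally show ?thesis by (simp add: N_def)
    qed
    have "m + c0 = (\<Sum>a\<in>A. (fl a + h a + N) *s a)"
    proof -
      have "m = (\<Sum>a\<in>A. fl a *s a) + y" by (simp add: y_def)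
      then have "m + c0 = (\<Sum>a\<in>A. fl a *s a + h a *s a + N *s a)"
        by (simp add: yh c0_def sum.distrib)
      also have "\<dots> = (\<Sum>a\<in>A. (fl a + h a + N) *s a)"
        by (intro sum.cong) (auto simp: vec_eq_iff algebra_simps)
      finally show ?thesis .
    qed
    also have "\<dots> \<in> semigrp A"
      by (rule semigrp_nonneg) (use fl0 hb in force)
    finally show ?thesis .
  qed
  then show ?thesis using c0 by blast
qed

definition delta :: "int ^ 'd \<Rightarrow> ('d::finite) lpoly" where
  "delta n = (\<lambda>m. if m = n then 1 else 0)"

definition Sset :: "(int ^ ('d::finite)) set \<Rightarrow> (int ^ 'd) set" where
  "Sset A = \<Inter> {{m. Fform A \<sigma> (to_real m) \<in> (\<lambda>n. Fform A \<sigma> (to_real n)) ` semigrp A}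
         | \<sigma>. \<sigma> facet_of real_cone A}"

lemma Sset_iff: "m \<in> Sset A \<longleftrightarrow> (\<forall>\<sigma>. \<sigma> facet_of real_cone A \<longrightarrow>
    Fform A \<sigma> (to_real m) \<in> (\<lambda>n. Fform A \<sigma> (to_real n)) ` semigrp A)"
  unfolding Sset_def by blast

lemma scored_Sset: "scored A \<longleftrightarrow> semigrp A = Sset A"
  unfolding scored_def Sset_def ..

lemma semigrp_Sset: "semigrp A \<subseteq> Sset A"
  by (auto simp: Sset_iff)

lemma delta_RS: "n \<in> T \<Longrightarrow> delta n \<in> RS T"
  by (auto simp: RS_def delta_def laurent_def)

lemma isdo_laurent:
  assumes "isdo Q" "laurent f" shows "laurent (Q f)"
proof -
  obtain U c where U: "finite U" "Q = (\<lambda>f m. \<Sum>ab\<in>U. c ab * mono_op (fst ab) (snd ab) f m)"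
    by (rule isdo_cases[OF assms(1)])
  have "{m. Q f m \<noteq> 0} \<subseteq> (\<Union>ab\<in>U. (\<lambda>n. n + fst ab - bvec (snd ab)) ` {n. f n \<noteq> 0})"
  proof
    fix m assume "m \<in> {m. Q f m \<noteq> 0}"
    then have "(\<Sum>ab\<in>U. c ab * mono_op (fst ab) (snd ab) f m) \<noteq> 0" using U(2) by simp
    then obtain ab where ab: "ab \<in> U" "c ab * mono_op (fst ab) (snd ab) f m \<noteq> 0"
      by (meson sum.neutral)
    then have "f (m - fst ab + bvec (snd ab)) \<noteq> 0" by (auto simp: mono_op_alt)
    moreover have "m = (m - fst ab + bvec (snd ab)) + fst ab - bvec (snd ab)" by simp
    ultimately show "m \<in> (\<Union>ab\<in>U. (\<lambda>n. n + fst ab - bvec (snd ab)) ` {n. f n \<noteq> 0})"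
      using ab(1) by blast
  qed
  moreover have "finite (\<Union>ab\<in>U. (\<lambda>n. n + fst ab - bvec (snd ab)) ` {n. f n \<noteq> 0})"
    using U(1) assms(2) by (auto simp: laurent_def)
  ultimately show ?thesis unfolding laurent_def by (rule finite_subset)
qed

lemma isdo_linear_sum:
  assumes "isdo Q" "finite V"
  shows "Q (\<lambda>m. \<Sum>u\<in>V. k u * g u m) m = (\<Sum>u\<in>V. k u * Q (g u) m)"
proof -
  obtain U c where U: "finite U" "Q = (\<lambda>f m. \<Sum>ab\<in>U. c ab * mono_op (fst ab) (snd ab) f m)"
    by (rule isdo_cases[OF assms(1)])
  have "Q (\<lambda>m. \<Sum>u\<in>V. k u * g u m) m = (\<Sum>ab\<in>U. c ab * (\<Sum>u\<in>V. k u * mono_op (fst ab) (snd ab) (g u) m))"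
    by (simp add: U(2) mono_op_lin)
  also have "\<dots> = (\<Sum>ab\<in>U. \<Sum>u\<in>V. k u * (c ab * mono_op (fst ab) (snd ab) (g u) m))"
    by (simp add: sum_distrib_left ac_simps)
  also have "\<dots> = (\<Sum>u\<in>V. \<Sum>ab\<in>U. k u * (c ab * mono_op (fst ab) (snd ab) (g u) m))"
    by (rule sum.swap)
  also have "\<dots> = (\<Sum>u\<in>V. k u * Q (g u) m)"
    by (simp add: U(2) sum_distrib_left)
  finally show ?thesis .
qed

lemma laurent_expand:
  assumes "laurent f" shows "f = (\<lambda>m. \<Sum>n\<in>{n. f n \<noteq> 0}. f n * delta n m)"
proof
  fix m
  have "(\<Sum>n\<in>{n. f n \<noteq> 0}. f n * delta n m) = (\<Sum>n\<in>{n. f n \<noteq> 0}. if n = m then f n else 0)"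
    by (intro sum.cong) (auto simp: delta_def)
  also have "\<dots> = f m" using assms by (simp add: laurent_def sum.delta)
  finally show "f m = (\<Sum>n\<in>{n. f n \<noteq> 0}. f n * delta n m)" by simp
qed

lemma isdo_expand:
  assumes "isdo Q" "laurent f"
  shows "Q f m = (\<Sum>n\<in>{n. f n \<noteq> 0}. f n * Q (delta n) m)"
proof -
  have "Q f m = Q (\<lambda>m. \<Sum>n\<in>{n. f n \<noteq> 0}. f n * delta n m) m"
    using laurent_expand[OF assms(2)] by metis
  also have "\<dots> = (\<Sum>n\<in>{n. f n \<noteq> 0}. f n * Q (delta n) m)"
    using assms by (intro isdo_linear_sum) (auto simp: laurent_def)
  finally show ?thesis .
qed

definition ffR :: "real ^ ('d::finite) \<Rightarrow> nat ^ 'd \<Rightarrow> complex" where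
  "ffR y b = (\<Prod>i\<in>UNIV. \<Prod>j<b $ i. of_real (y $ i) - of_nat j)"

lemma pfr_coord_minus: "pfr (\<lambda>y. of_real (y $ i) - c)"
proof -
  have "pfr (\<lambda>y. of_real (y $ i) + (- c))" by (intro pfr_add pfr_coord pfr_const)
  then show ?thesis by simp
qed

lemma pfr_ffR: "pfr (\<lambda>y. ffR y b)"
  unfolding ffR_def
  by (intro pfr_prod finite pfr_coord_minus finite_lessThan)

lemma ffR_to_real: "ffR (to_real x) b = ffc x b"
  by (simp add: ffR_def ffc_def to_real_nth of_int_prod)

lemma Q_delta:
  "diffop c (delta x) (x + s) = (\<Sum>ab\<in>{ab. c ab \<noteq> 0}. c ab * (if fst ab - bvec (snd ab) = s then ffc x (snd ab) else 0))"
  unfolding diffop_def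
proof (intro sum.cong refl)
  fix ab :: "(int ^ 'a) \<times> (nat ^ 'a)"
  have "(x + s - fst ab + bvec (snd ab) = x) \<longleftrightarrow> (fst ab - bvec (snd ab) = s)"
    by (auto simp: algebra_simps)
  then show "c ab * mono_op (fst ab) (snd ab) (delta x) (x + s) =
      c ab * (if fst ab - bvec (snd ab) = s then ffc x (snd ab) else 0)"
    by (auto simp: mono_op_alt delta_def)
qed

lemma pfr_cond: "pfr (\<lambda>y. k * (if P then ffR y b else 0))"
proof (cases P)
  case True then show ?thesis using pfr_mult[OF pfr_const pfr_ffR, of k b] by simp
next
  case False then show ?thesis using pfr_const[of 0] by simp
qed

lemma key_vanish:
  fixes A :: "(int ^ 'd) set"
  assumes fin: "finite A" and grp: "grp A = UNIV" and Q: "Q \<in> DR A"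
    and n: "n \<in> Sset A" and m: "m \<notin> Sset A"
  shows "Q (delta n) m = 0"
proof -
  obtain c where c: "diff_coeffs c" "Q = diffop c" and QRA: "\<forall>f\<in>R_A A. Q f \<in> R_A A"
    using Q unfolding DR_def by blast
  define s where "s = m - n"
  from m obtain \<sigma> where fac: "\<sigma> facet_of real_cone A"
    and Fm: "Fform A \<sigma> (to_real m) \<notin> (\<lambda>n. Fform A \<sigma> (to_real n)) ` semigrp A"
    unfolding Sset_iff by blast
  define F where "F = Fform A \<sigma>"
  from n fac have "F (to_real n) \<in> (\<lambda>n. F (to_real n)) ` semigrp A"
    unfolding Sset_iff F_def by blast
  then obtain n' where n': "n' \<in> semigrp A" "F (to_real n) = F (to_real n')" by blast
  obtain A' where A': "A' \<subseteq> A" "linear F" "\<forall>a\<in>A'. F (to_real a) = 0" "{x. F x = 0} \<subseteq> span (to_real ` A')"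
    using facet_props[OF fin grp fac] unfolding F_def by blast
  have finA': "finite A'" using A'(1) fin by (rule finite_subset)
  define C where "C = {ab. c ab \<noteq> 0}"
  have finC: "finite C" using c(1) by (simp add: C_def diff_coeffs_def)
  define G where "G y = (\<Sum>ab\<in>C. c ab * (if fst ab - bvec (snd ab) = s then ffR y (snd ab) else 0))" for y
  have pfrG: "pfr G" unfolding G_def
    by (intro pfr_sum finC pfr_cond)
  have hQ: "Q (delta x) (x + s) = G (to_real x)" for x
    unfolding c(2) Q_delta G_def C_def by (intro sum.cong refl) (simp add: ffR_to_real)
  have latt: "G (to_real n' + (\<Sum>a\<in>A'. real (k a) *\<^sub>R to_real a)) = 0" for k :: "int ^ 'd \<Rightarrow> nat"
  proof -
    define x where "x = n' + (\<Sum>a\<in>A'. int (k a) *s a)"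
    have xNA: "x \<in> semigrp A" unfolding x_def by (intro semigrp_add n'(1) semigrp_subsum fin A'(1))
    have tx: "to_real x = to_real n' + (\<Sum>a\<in>A'. real (k a) *\<^sub>R to_real a)"
      by (simp add: x_def to_real_add to_real_sum to_real_scale)
    have "F (\<Sum>a\<in>A'. real (k a) *\<^sub>R to_real a) = (\<Sum>a\<in>A'. real (k a) * F (to_real a))"
      using A'(2) by (simp add: linear_sum linear_scale)
    also have "\<dots> = 0" using A'(3) by simp
    finally have Fx: "F (to_real x) = F (to_real n')"
      using A'(2) by (simp add: tx linear_add)
    have "F (to_real (x + s)) = F (to_real x) + F (to_real m) - F (to_real n)"
      using A'(2) by (simp add: s_def to_real_add to_real_diff linear_add linear_diff)
    then have "F (to_real (x + s)) = F (to_real m)" using Fx n'(2) by simp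
    then have "x + s \<notin> semigrp A"
    proof (intro notI)
      assume e: "F (to_real (x + s)) = F (to_real m)" and xs: "x + s \<in> semigrp A"
      then have "F (to_real m) \<in> (\<lambda>n. F (to_real n)) ` semigrp A" by (metis image_eqI)
      then show False using Fm unfolding F_def by simp
    qed
    moreover have "Q (delta x) \<in> R_A A" using QRA delta_RS[OF xNA] by (simp add: R_A_RS)
    ultimately have "Q (delta x) (x + s) = 0" by (auto simp: R_A_RS RS_def)
    then show ?thesis using hQ tx by simp
  qed
  have dens: "G (to_real n' + (\<Sum>a\<in>A'. r a *\<^sub>R to_real a)) = 0" for r
    using pfr_density[OF finA' pfrG latt] .
  have "F (to_real n - to_real n') = 0" using A'(2) n'(2) by (simp add: linear_diff)
  then have "to_real n - to_real n' \<in> span (to_real ` A')" using A'(4) by blast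
  then obtain u where u: "to_real n - to_real n' = (\<Sum>v\<in>to_real ` A'. u v *\<^sub>R v)"
    using span_finite[of "to_real ` A'"] finA' by auto
  also have "\<dots> = (\<Sum>a\<in>A'. u (to_real a) *\<^sub>R to_real a)"
  proof -
    have "inj_on to_real A'" using to_real_inj by (rule inj_on_subset) simp
    then show ?thesis using sum.reindex[of to_real A' "\<lambda>v. u v *\<^sub>R v"] by (simp add: o_def)
  qed
  finally have "to_real n = to_real n' + (\<Sum>a\<in>A'. u (to_real a) *\<^sub>R to_real a)"
    by (simp add: algebra_simps)
  then have "G (to_real n) = 0" using dens[of "\<lambda>a. u (to_real a)"] by simp
  then have "Q (delta n) (n + s) = 0" using hQ by simp
  then show ?thesis by (simp add: s_def)
qed

lemma bvec_zero: "bvec 0 = 0"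
  by (simp add: bvec_def vec_eq_iff)

lemma mono_shift: "mono_op c0 0 f m = f (m - c0)"
  by (simp add: mono_op_alt bvec_zero ffc_zero)

theorem proposition8p5:
  fixes A :: "(int ^ 'd) set"
  assumes "finite A"
    and "grp A = UNIV"
    and "simple_ring (D_ring A)"
  shows "scored A"
proof (rule ccontr)
  note fin = assms(1) and grp = assms(2)
  assume ns: "\<not> scored A"
  let ?R = "D_ring A"
  let ?S = "Sset A"
  obtain m0 where m0: "m0 \<in> ?S" "m0 \<notin> semigrp A"
    using ns semigrp_Sset unfolding scored_Sset by blast
  have Scone: "to_real m \<in> real_cone A" if mS: "m \<in> ?S" for m
  proof (rule ccontr)
    assume "to_real m \<notin> real_cone A"
    then obtain \<sigma> where fac: "\<sigma> facet_of real_cone A" "Fform A \<sigma> (to_real m) < 0"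
      using outside_cone[OF fin grp] by blast
    from mS fac(1) have "Fform A \<sigma> (to_real m) \<in> (\<lambda>n. Fform A \<sigma> (to_real n)) ` semigrp A"
      unfolding Sset_iff by blast
    then obtain n where n: "n \<in> semigrp A" "Fform A \<sigma> (to_real m) = Fform A \<sigma> (to_real n)" by blast
    moreover have "Fform A \<sigma> (to_real n) \<ge> 0"
      using facet_props[OF fin grp fac(1)] semigrp_cone[OF fin n(1)] by blast
    ultimately show False using fac(2) by simp
  qed
  obtain c0 where c0: "c0 \<in> semigrp A" "\<forall>m. to_real m \<in> real_cone A \<longrightarrow> m + c0 \<in> semigrp A"
    using conductor[OF fin grp] by blast
  define I where "I = {P \<in> DR A. \<forall>f\<in>RS ?S. P f \<in> R_A A}"
  have Ipres: "Q f \<in> RS ?S" if QD: "Q \<in> DR A" and fS: "f \<in> RS ?S" for Q f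
  proof -
    have isdoQ: "isdo Q" using QD by (simp add: DR_iff)
    have lf: "laurent f" using fS by (simp add: RS_def)
    have "Q f m = 0" if mS: "m \<notin> ?S" for m
    proof -
      have "Q f m = (\<Sum>n\<in>{n. f n \<noteq> 0}. f n * Q (delta n) m)" by (rule isdo_expand[OF isdoQ lf])
      also have "\<dots> = 0"
      proof (rule sum.neutral, intro ballI)
        fix n assume "n \<in> {n. f n \<noteq> 0}"
        then have "n \<in> ?S" using fS by (auto simp: RS_def)
        then show "f n * Q (delta n) m = 0" using key_vanish[OF fin grp QD _ mS] by simp
      qed
      finally show ?thesis .
    qed
    then show ?thesis using isdo_laurent[OF isdoQ lf] by (auto simp: RS_def)
  qed
  have sub: "I \<subseteq> carrier (add_monoid ?R)" by (auto simp: I_def D_ring_def)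
  have mul: "\<forall>x y. x \<in> I \<longrightarrow> y \<in> I \<longrightarrow> x \<otimes>\<^bsub>add_monoid ?R\<^esub> y \<in> I"
  proof (intro allI impI)
    fix x y assume xy: "x \<in> I" "y \<in> I"
    have "x \<otimes>\<^bsub>add_monoid ?R\<^esub> y = (\<lambda>f m. x f m + y f m)" by (simp add: D_ring_def)
    moreover have "(\<lambda>f m. x f m + y f m) \<in> I"
      using xy by (auto simp: I_def DR_iff R_A_RS intro: isdo_add RS_add)
    ultimately show "x \<otimes>\<^bsub>add_monoid ?R\<^esub> y \<in> I" by simp
  qed
  have one: "\<one>\<^bsub>add_monoid ?R\<^esub> \<in> I"
  proof -
    have "\<one>\<^bsub>add_monoid ?R\<^esub> = (\<lambda>f m. 0)" by (simp add: D_ring_def)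
    moreover have "(\<lambda>(f::'d lpoly) (m::int^'d). 0::complex) \<in> I"
      by (auto simp: I_def DR_iff R_A_RS intro: isdo_zero RS_zero)
    ultimately show ?thesis by simp
  qed
  have inv: "\<forall>x. x \<in> I \<longrightarrow> inv\<^bsub>add_monoid ?R\<^esub> x \<in> I"
  proof (intro allI impI)
    fix x assume x: "x \<in> I"
    then have xc: "x \<in> carrier ?R" by (auto simp: I_def D_ring_def)
    have "inv\<^bsub>add_monoid ?R\<^esub> x = \<ominus>\<^bsub>?R\<^esub> x" by (simp add: a_inv_def)
    also have "\<dots> = (\<lambda>f m. - x f m)" by (rule D_a_inv[OF xc])
    finally have e: "inv\<^bsub>add_monoid ?R\<^esub> x = (\<lambda>f m. - x f m)" .
    have "(\<lambda>f m. - x f m) \<in> I"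
      using x isdo_smult[of x "-1"] by (auto simp: I_def DR_iff R_A_RS intro: RS_neg)
    then show "inv\<^bsub>add_monoid ?R\<^esub> x \<in> I" using e by simp
  qed
  have ideal: "ideal I ?R"
  proof (rule idealI[OF ring_D])
    show "subgroup I (add_monoid ?R)" unfolding subgroup_def using sub mul one inv by blast
  next
    fix a x assume a: "a \<in> I" and x: "x \<in> carrier ?R"
    have aD: "a \<in> DR A" and aS: "\<forall>f\<in>RS ?S. a f \<in> R_A A" using a by (auto simp: I_def)
    have xD: "x \<in> DR A" using x by (simp add: D_ring_def)
    have "x \<circ> a \<in> I"
      using aD aS xD by (auto simp: I_def DR_iff intro: isdo_comp)
    then show "x \<otimes>\<^bsub>?R\<^esub> a \<in> I" by (simp add: D_ring_def)
    have "a \<circ> x \<in> I"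
      using aD aS xD Ipres[OF xD] by (auto simp: I_def DR_iff intro: isdo_comp)
    then show "a \<otimes>\<^bsub>?R\<^esub> x \<in> I" by (simp add: D_ring_def)
  qed
  have P0I: "mono_op c0 0 \<in> I"
  proof -
    have iso: "isdo (mono_op c0 0)" by (rule isdo_mono)
    have supp: "mono_op c0 0 f \<in> R_A A" if lf: "laurent f" and fT: "\<And>m. f m \<noteq> 0 \<Longrightarrow> m + c0 \<in> semigrp A" for f
    proof -
      have "laurent (mono_op c0 0 f)" by (rule isdo_laurent[OF iso lf])
      moreover have "m \<in> semigrp A" if "mono_op c0 0 f m \<noteq> 0" for m
        using fT[of "m - c0"] that by (simp add: mono_shift)
      ultimately show ?thesis by (auto simp: R_A_def)
    qed
    have "mono_op c0 0 f \<in> R_A A" if "f \<in> R_A A" for f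
      using that by (intro supp) (auto simp: R_A_def intro: semigrp_add c0(1))
    moreover have "mono_op c0 0 f \<in> R_A A" if "f \<in> RS ?S" for f
      using that by (intro supp) (auto simp: RS_def intro!: c0(2)[rule_format] Scone)
    ultimately show ?thesis using iso by (auto simp: I_def DR_iff)
  qed
  have P0nz: "mono_op c0 0 \<noteq> \<zero>\<^bsub>?R\<^esub>"
  proof
    assume "mono_op c0 0 = \<zero>\<^bsub>?R\<^esub>"
    then have "mono_op c0 0 (delta 0) c0 = 0" by (simp add: D_ring_def)
    then show False by (simp add: mono_shift delta_def)
  qed
  have idc: "\<one>\<^bsub>?R\<^esub> \<in> carrier ?R" using ring_D[of A] by (simp add: ring.ring_simprules(6))
  have idI: "\<one>\<^bsub>?R\<^esub> \<notin> I"
  proof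
    assume "\<one>\<^bsub>?R\<^esub> \<in> I"
    then have "id (delta m0) \<in> R_A A" using delta_RS[OF m0(1)] by (auto simp: I_def D_ring_def)
    then have "{m. delta m0 m \<noteq> 0} \<subseteq> semigrp A" by (simp add: R_A_def)
    moreover have "m0 \<in> {m. delta m0 m \<noteq> 0}" by (simp add: delta_def)
    ultimately show False using m0(2) by blast
  qed
  have "I = {\<zero>\<^bsub>?R\<^esub>} \<or> I = carrier ?R" using assms(3) ideal unfolding simple_ring_def by blast
  then show False using P0I P0nz idc idI by blast
qed

end
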